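(* Let $V$ be a finite ground set, let $(V,\mathcal{F})$ be a matroid whose largest independent set has cardinality $K$, and let $f:2^V\to\mathbb{R}$ be nondecreasing with submodularity ratio $\gamma$. Let $S^*\in\arg\max_{S\in\mathcal{F}} f(S)$ and let $S^{\mathrm{G}}$ be the output of the greedy algorithm described below. Then $$\frac{f(S^{\mathrm{G}})-f(\emptyset)}{f(S^* )-f(\emptyset)}\ \ge\ \frac{\gamma^3}{\gamma^3+1}.$$
   Context: $f$ is nondecreasing if $f(S_1)\le f(S_2)$ for all $S_1\subsetneqq S_2\subset V$. For $S,U\subset V$ let $\rho_U(S)=f(S\cup U)-f(S)$, and write $\rho_\omega(S)=\rho_{\{\omega\}}(S)$. The submodularity ratio of a nondecreasing $f$ is the largest $\gamma\in\mathbb{R}_+$ such that $\gamma\,\rho_\omega(S\cup U)\le\rho_\omega(S)$ for all $S,U\subset V$ and all $\omega\in V$. A matroid $(V,\mathcal{F})$: $\emptyset\in\mathcal{F}$; $\mathcal{F}$ is closed under taking subsets; and if $S_1,S_2\in\mathcal{F}$ with $|S_1|<|S_2|$ there is $\omega\in S_2\setminus S_1$ with $S_1\cup\{\omega\}\in\mathcal{F}$. Greedy algorithm: set $S=\emptyset$, $U=\emptyset$. While $U\neq V$: choose $i\in\arg\max_{i\in V\setminus U}\rho_i(S)$; if $S\cup\{i\}\notin\mathcal{F}$, set $U\leftarrow U\cup\{i\}$; otherwise set $S\leftarrow S\cup\{i\}$ and $U\leftarrow U\cup\{i\}$. When $U=V$, output $S^{\mathrm{G}}=S$. The ratio in the claim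 is considered when $f(S^* )\neq f(\emptyset)$. *)

theory Defs
  imports Complex_Main
begin

definition nondecreasing :: "'a set \<Rightarrow> ('a set \<Rightarrow> real) \<Rightarrow> bool" where
  "nondecreasing V f \<longleftrightarrow> (\<forall>S1 S2. S1 \<subset> S2 \<and> S2 \<subseteq> V \<longrightarrow> f S1 \<le> f S2)"

definition rho :: "('a set \<Rightarrow> real) \<Rightarrow> 'a set \<Rightarrow> 'a set \<Rightarrow> real" where
  "rho f U S = f (S \<union> U) - f S"

abbreviation rho1 :: "('a set \<Rightarrow> real) \<Rightarrow> 'a \<Rightarrow> 'a set \<Rightarrow> real" where
  "rho1 f w S \<equiv> rho f {w} S"

definition ratio_ok :: "'a set \<Rightarrow> ('a set \<Rightarrow> real) \<Rightarrow> real \<Rightarrow> bool" where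
  "ratio_ok V f g \<longleftrightarrow> g \<ge> 0 \<and>
     (\<forall>S U w. S \<subseteq> V \<and> U \<subseteq> V \<and> w \<in> V \<longrightarrow> g * rho1 f w (S \<union> U) \<le> rho1 f w S)"

definition submodularity_ratio :: "'a set \<Rightarrow> ('a set \<Rightarrow> real) \<Rightarrow> real \<Rightarrow> bool" where
  "submodularity_ratio V f g \<longleftrightarrow> ratio_ok V f g \<and> (\<forall>g'. ratio_ok V f g' \<longrightarrow> g' \<le> g)"

definition matroid :: "'a set \<Rightarrow> 'a set set \<Rightarrow> bool" where
  "matroid V F \<longleftrightarrow> F \<subseteq> Pow V \<and> {} \<in> F \<and>
     (\<forall>S T. T \<in> F \<and> S \<subseteq> T \<longrightarrow> S \<in> F) \<and>
     (\<forall>S1 S2. S1 \<in> F \<and> S2 \<in> F \<and> card S1 < card S2 \<longrightarrow> (\<exists>w \<in> S2 - S1. insert w S1 \<in> F))"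

text \<open>Reachable states (S,U) of the greedy algorithm (ties in the argmax are broken arbitrarily).\<close>
inductive greedy_state :: "'a set \<Rightarrow> 'a set set \<Rightarrow> ('a set \<Rightarrow> real) \<Rightarrow> 'a set \<Rightarrow> 'a set \<Rightarrow> bool"
  for V F f where
  init: "greedy_state V F f {} {}"
| step: "greedy_state V F f S U \<Longrightarrow> U \<noteq> V \<Longrightarrow> i \<in> V - U \<Longrightarrow>
         (\<forall>j \<in> V - U. rho1 f j S \<le> rho1 f i S) \<Longrightarrow>
         greedy_state V F f (if insert i S \<in> F then insert i S else S) (insert i U)"

definition greedy_output :: "'a set \<Rightarrow> 'a set set \<Rightarrow> ('a set \<Rightarrow> real) \<Rightarrow> 'a set \<Rightarrow> bool" where
  "greedy_output V F f SG \<longleftrightarrow> greedy_state V F f SG V"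

end

theory Submission
  imports Defs
begin

lemma mono_le:
  assumes "nondecreasing V f" "A \<subseteq> B" "B \<subseteq> V"
  shows "f A \<le> f B"
proof (cases "A = B")
  case False
  then show ?thesis using assms unfolding nondecreasing_def by blast
qed simp

lemma greedy_inv:
  assumes "greedy_state V F f S U" "matroid V F" "ratio_ok V f \<gamma>" "finite V"
    "nondecreasing V f"
  shows "S \<in> F \<and> S \<subseteq> U \<and> U \<subseteq> V \<and> (\<forall>x \<in> U - S. insert x S \<notin> F) \<and>
    (\<forall>T \<in> F. card T \<le> card S \<longrightarrow> (\<forall>W. S \<subseteq> W \<and> W \<subseteq> V \<longrightarrow>
        \<gamma> * (\<Sum>x\<in>T. rho1 f x W) \<le> f S - f {}))"
  using assms(1)
proof (induction rule: greedy_state.induct)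
  case init
  have "{} \<in> F" using assms(2) unfolding matroid_def by auto
  moreover have "\<forall>T \<in> F. card T \<le> 0 \<longrightarrow> T = {}"
  proof (intro ballI impI)
    fix T assume "T \<in> F" "card T \<le> 0"
    moreover have "T \<subseteq> V" using \<open>T \<in> F\<close> assms(2) unfolding matroid_def by auto
    ultimately show "T = {}" using assms(4) finite_subset by fastforce
  qed
  ultimately show ?case by auto
next
  case (step S U i)
  have FV: "F \<subseteq> Pow V" and dc: "\<And>S T. T \<in> F \<Longrightarrow> S \<subseteq> T \<Longrightarrow> S \<in> F"
    and aug: "\<And>S1 S2. S1 \<in> F \<Longrightarrow> S2 \<in> F \<Longrightarrow> card S1 < card S2 \<Longrightarrow> (\<exists>w \<in> S2 - S1. insert w S1 \<in> F)"
    using assms(2) unfolding matroid_def by blast+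
  have g0: "\<gamma> \<ge> 0" and rat: "\<And>S U w. S \<subseteq> V \<Longrightarrow> U \<subseteq> V \<Longrightarrow> w \<in> V \<Longrightarrow>
      \<gamma> * rho1 f w (S \<union> U) \<le> rho1 f w S"
    using assms(3) unfolding ratio_ok_def by blast+
  from step.IH have SF: "S \<in> F" and SU: "S \<subseteq> U" and UV: "U \<subseteq> V"
    and rej: "\<forall>x \<in> U - S. insert x S \<notin> F"
    and IH: "\<forall>T \<in> F. card T \<le> card S \<longrightarrow> (\<forall>W. S \<subseteq> W \<and> W \<subseteq> V \<longrightarrow>
        \<gamma> * (\<Sum>x\<in>T. rho1 f x W) \<le> f S - f {})" by auto
  have SV: "S \<subseteq> V" using SU UV by auto
  have iS: "i \<notin> S" using step.hyps SU by auto
  have finS: "finite S" using SV assms(4) finite_subset by auto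
  show ?case
  proof (cases "insert i S \<in> F")
    case False
    have "i \<in> V" using step.hyps by blast
    then show ?thesis using False SF SU UV rej IH by auto
  next
    case True
    let ?S' = "insert i S"
    have mono: "f S \<le> f ?S'" using mono_le[OF assms(5), of S ?S'] step.hyps SV by auto
    have rej': "\<forall>x \<in> insert i U - ?S'. insert x ?S' \<notin> F"
    proof
      fix x assume "x \<in> insert i U - ?S'"
      hence "insert x S \<notin> F" using rej by auto
      thus "insert x ?S' \<notin> F" using dc[of "insert x ?S'" "insert x S"] by auto
    qed
    have main: "\<forall>T \<in> F. card T \<le> card ?S' \<longrightarrow> (\<forall>W. ?S' \<subseteq> W \<and> W \<subseteq> V \<longrightarrow>
        \<gamma> * (\<Sum>x\<in>T. rho1 f x W) \<le> f ?S' - f {})"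
    proof (intro ballI impI allI)
      fix T W assume TF: "T \<in> F" and cT: "card T \<le> card ?S'" and W: "?S' \<subseteq> W \<and> W \<subseteq> V"
      have TV: "T \<subseteq> V" using TF FV by auto
      have finT: "finite T" using TV assms(4) finite_subset by auto
      have cS': "card ?S' = Suc (card S)" using iS finS by simp
      show "\<gamma> * (\<Sum>x\<in>T. rho1 f x W) \<le> f ?S' - f {}"
      proof (cases "card T \<le> card S")
        case True
        hence "\<gamma> * (\<Sum>x\<in>T. rho1 f x W) \<le> f S - f {}" using IH TF W by blast
        then show ?thesis using mono by linarith
      next
        case False
        hence cT1: "card T = Suc (card S)" using cT cS' by auto
        then obtain x where x: "x \<in> T - S" "insert x S \<in> F" using aug[OF SF TF] by auto
        have oV: "x \<in> V" using x TV by auto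
        have oU: "x \<notin> U" using x rej by auto
        have TmF: "T - {x} \<in> F" using dc[OF TF] by auto
        have cTm: "card (T - {x}) \<le> card S" using cT1 x finT by simp
        have h1: "\<gamma> * (\<Sum>x\<in>T - {x}. rho1 f x W) \<le> f S - f {}"
          using IH TmF cTm W by auto
        have "\<gamma> * rho1 f x (S \<union> W) \<le> rho1 f x S" using rat[of S W x] SV W oV by auto
        also have "\<dots> \<le> rho1 f i S" using step.hyps(4) oV oU by auto
        also have "\<dots> = f ?S' - f S" unfolding rho_def by simp
        finally have h2: "\<gamma> * rho1 f x W \<le> f ?S' - f S" using W by (simp add: sup.absorb2)
        have "(\<Sum>x\<in>T. rho1 f x W) = rho1 f x W + (\<Sum>x\<in>T - {x}. rho1 f x W)"
          using sum.remove[OF finT, of x "\<lambda>y. rho1 f y W"] x by simp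
        then show ?thesis using h1 h2 by (simp add: distrib_left)
      qed
    qed
    have "i \<in> V" using step.hyps by blast
    then show ?thesis using True SU UV rej' main by auto
  qed
qed

lemma sum_bound:
  assumes "ratio_ok V f \<gamma>" "finite T" "T \<subseteq> V" "S \<subseteq> V"
  shows "\<gamma> * (f (S \<union> T) - f S) \<le> (\<Sum>x\<in>T. rho1 f x S)"
  using assms(2,3)
proof (induction T rule: finite_induct)
  case empty
  then show ?case by simp
next
  case (insert x T)
  have rat: "\<gamma> * rho1 f x (S \<union> T) \<le> rho1 f x S"
    using assms(1,4) insert.prems unfolding ratio_ok_def by blast
  have e: "S \<union> insert x T = (S \<union> T) \<union> {x}" by auto
  have "\<gamma> * (f (S \<union> insert x T) - f S) = \<gamma> * rho1 f x (S \<union> T) + \<gamma> * (f (S \<union> T) - f S)"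
    unfolding rho_def e by (simp add: algebra_simps)
  also have "\<dots> \<le> rho1 f x S + (\<Sum>x\<in>T. rho1 f x S)"
    using rat insert.IH insert.prems by auto
  finally show ?case using insert.hyps by simp
qed

lemma all_zero:
  assumes "\<forall>S w. S \<subseteq> V \<and> w \<in> V \<longrightarrow> rho1 f w S \<le> 0" "finite T" "T \<subseteq> V"
  shows "f T \<le> f {}"
  using assms(2,3)
proof (induction T rule: finite_induct)
  case empty
  then show ?case by simp
next
  case (insert x T)
  have "rho1 f x T \<le> 0" using assms(1) insert.prems by auto
  hence "f (insert x T) \<le> f T" unfolding rho_def by simp
  then show ?case using insert by auto
qed

theorem theorem2:
  fixes V :: "'a set" and F :: "'a set set" and f :: "'a set \<Rightarrow> real"
    and K :: nat and \<gamma> :: real and Sstar SG :: "'a set"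
  assumes "finite V"
    and "matroid V F"
    and "K = Max (card ` F)"
    and "nondecreasing V f"
    and "submodularity_ratio V f \<gamma>"
    and "Sstar \<in> F" and "\<forall>S \<in> F. f S \<le> f Sstar"
    and "greedy_output V F f SG"
    and "f Sstar \<noteq> f {}"
  shows "(f SG - f {}) / (f Sstar - f {}) \<ge> \<gamma> ^ 3 / (\<gamma> ^ 3 + 1)"
proof -
  have gs: "greedy_state V F f SG V" using assms(8) unfolding greedy_output_def .
  have ro: "ratio_ok V f \<gamma>" using assms(5) unfolding submodularity_ratio_def by blast
  have g0: "\<gamma> \<ge> 0" using ro unfolding ratio_ok_def by blast
  have FV: "F \<subseteq> Pow V"
    and aug: "\<And>S1 S2. S1 \<in> F \<Longrightarrow> S2 \<in> F \<Longrightarrow> card S1 < card S2 \<Longrightarrow> (\<exists>w \<in> S2 - S1. insert w S1 \<in> F)"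
    using assms(2) unfolding matroid_def by blast+
  note inv = greedy_inv[OF gs assms(2) ro assms(1) assms(4)]
  have SGF: "SG \<in> F" and SGV: "SG \<subseteq> V" and rej: "\<forall>x \<in> V - SG. insert x SG \<notin> F"
    using inv by auto
  have SsV: "Sstar \<subseteq> V" using assms(6) FV by auto
  have finSs: "finite Sstar" using SsV assms(1) finite_subset by auto
  have card: "card Sstar \<le> card SG"
  proof (rule ccontr)
    assume "\<not> card Sstar \<le> card SG"
    then obtain w where "w \<in> Sstar - SG" "insert w SG \<in> F" using aug[OF SGF assms(6)] by auto
    then show False using rej SsV by auto
  qed
  have h1: "\<gamma> * (\<Sum>x\<in>Sstar. rho1 f x SG) \<le> f SG - f {}"
    using inv assms(6) card SGV by blast
  have h2: "\<gamma> * (f (SG \<union> Sstar) - f SG) \<le> (\<Sum>x\<in>Sstar. rho1 f x SG)"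
    using sum_bound[OF ro finSs SsV SGV] .
  have h3: "\<gamma> * (\<gamma> * (f (SG \<union> Sstar) - f SG)) \<le> f SG - f {}"
    using mult_left_mono[OF h2 g0] h1 by linarith
  have m1: "f Sstar \<le> f (SG \<union> Sstar)" using mono_le[OF assms(4)] SGV SsV by auto
  have m2: "f {} \<le> f SG" using mono_le[OF assms(4)] SGV by auto
  have m3: "f {} \<le> f Sstar" using mono_le[OF assms(4)] SsV by auto
  have bpos: "f Sstar - f {} > 0" using m3 assms(9) by auto
  have g1: "\<gamma> \<le> 1"
  proof (rule ccontr)
    assume ng: "\<not> \<gamma> \<le> 1"
    have "\<forall>S w. S \<subseteq> V \<and> w \<in> V \<longrightarrow> rho1 f w S \<le> 0"
    proof (intro allI impI)
      fix S w assume "S \<subseteq> V \<and> w \<in> V"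
      hence "\<gamma> * rho1 f w (S \<union> {}) \<le> rho1 f w S" using ro unfolding ratio_ok_def by blast
      hence "(\<gamma> - 1) * rho1 f w S \<le> 0" by (simp add: algebra_simps)
      thus "rho1 f w S \<le> 0" using ng by (simp add: mult_le_0_iff)
    qed
    hence "f Sstar \<le> f {}" using all_zero finSs SsV by blast
    thus False using bpos by simp
  qed
  define a where "a = f SG - f {}"
  define b where "b = f Sstar - f {}"
  define c where "c = f (SG \<union> Sstar) - f SG"
  have a0: "a \<ge> 0" using m2 a_def by simp
  have b0: "b > 0" using bpos b_def by simp
  have cb: "c \<ge> b - a" using m1 a_def b_def c_def by simp
  have gc: "\<gamma>^2 * c \<le> a" using h3 unfolding a_def c_def by (simp add: power2_eq_square mult.assoc)
  have g32: "\<gamma>^3 \<le> \<gamma>^2" using g0 g1 by (simp add: power_decreasing)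
  have key: "\<gamma>^3 * (b - a) \<le> a"
  proof (cases "b \<le> a")
    case True
    have "\<gamma>^3 * (b - a) \<le> 0" using True g0 by (simp add: mult_nonneg_nonpos)
    then show ?thesis using a0 by linarith
  next
    case False
    have "\<gamma>^3 * (b - a) \<le> \<gamma>^2 * (b - a)" using g32 False by (simp add: mult_right_mono)
    also have "\<dots> \<le> \<gamma>^2 * c" using cb by (simp add: mult_left_mono)
    finally show ?thesis using gc by linarith
  qed
  have g3: "\<gamma>^3 \<ge> 0" using g0 by simp
  have "\<gamma> ^ 3 / (\<gamma> ^ 3 + 1) \<le> a / b"
  proof -
    have p: "\<gamma>^3 + 1 > 0" using g3 by linarith
    have "\<gamma>^3 * b \<le> a * (\<gamma>^3 + 1)" using key by (simp add: algebra_simps)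
    then show ?thesis using p b0 by (simp add: divide_simps)
  qed
  then show ?thesis using a_def b_def by simp
qed

end
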